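(* For every complex number $s$ with $\operatorname{Re}(s)>2$, $$\sum_{n\ge1}\frac{\mu(n)\delta(n)}{n^s}=-\frac{F(s-1)}{\zeta(s-1)}.$$
   Context: The arithmetic derivative $\delta$ is defined by $\delta(p)=1$ for every prime $p$ and $\delta(mn)=m\delta(n)+n\delta(m)$ for all positive integers $m,n$; equivalently $\delta(1)=0$ and $\delta(n)=n\sum_{p^\alpha\| n}\alpha/p$. $\mu$ is the Möbius function, $\zeta$ is the Riemann zeta function and $F(s)=\sum_{p\text{ prime}}\frac{1}{p^{s+1}-p}$. *)

theory Defs
  imports "HOL-Complex_Analysis.Complex_Analysis" "HOL-Computational_Algebra.Squarefree"
begin

text \<open>Arithmetic derivative: delta 0 = 0 by convention (0 never occurs in the statement),
  delta n = n * (sum over primes p dividing n of multiplicity p n / p).\<close>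
definition arith_deriv :: "nat \<Rightarrow> nat" where
  "arith_deriv n = (if n = 0 then 0 else
     (\<Sum>p\<in>prime_factors n. multiplicity p n * (n div p)))"

definition moebius_mu :: "nat \<Rightarrow> int" where
  "moebius_mu n = (if n = 0 then 0 else if squarefree n then (-1) ^ card (prime_factors n) else 0)"

text \<open>Riemann zeta function on the half-plane Re s > 1, given by its Dirichlet series
  (this is the only region in which it is used).\<close>
definition zeta_dirichlet :: "complex \<Rightarrow> complex" where
  "zeta_dirichlet s = (\<Sum>\<^sub>\<infinity>n\<in>{1::nat..}. 1 / of_nat n powr s)"

definition F_prime :: "complex \<Rightarrow> complex" where
  "F_prime s = (\<Sum>\<^sub>\<infinity>p\<in>{p::nat. prime p}. 1 / (of_nat p powr (s + 1) - of_nat p))"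

end

theory Submission
  imports Defs
begin

lemma prod_pf_dvd: "n \<noteq> 0 \<Longrightarrow> \<Prod>(prime_factors n) dvd (n::nat)"
proof -
  assume n: "n \<noteq> 0"
  have "(\<Prod>p\<in>prime_factors n. p) dvd (\<Prod>p\<in>prime_factors n. p ^ multiplicity p n)"
    by (intro prod_dvd_prod) (simp add: prime_factors_multiplicity dvd_power)
  also have "\<dots> = n" using prod_prime_factors[OF n] by simp
  finally show ?thesis .
qed

lemma sqf_prod:
  assumes "finite S" "\<forall>p\<in>S. prime (p::nat)"
  shows "\<Prod>S \<noteq> 0" "prime_factors (\<Prod>S) = S" "squarefree (\<Prod>S)"
proof -
  show "\<Prod>S \<noteq> 0" using assms by (auto simp: prime_gt_0_nat)
  show "prime_factors (\<Prod>S) = S"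
    using assms by (subst prime_factors_prod) (auto simp: prime_prime_factors)
  show "squarefree (\<Prod>S)"
    using assms by (intro squarefree_prod_coprime) (auto simp: primes_coprime squarefree_prime)
qed

lemma sqf_eq_prod: "squarefree (d::nat) \<Longrightarrow> \<Prod>(prime_factors d) = d"
proof -
  assume sq: "squarefree d"
  hence d: "d \<noteq> 0" by (metis not_squarefree_0)
  have "(\<Prod>p\<in>prime_factors d. p ^ multiplicity p d) = d" using prod_prime_factors[OF d] by simp
  moreover have "\<And>p. p \<in> prime_factors d \<Longrightarrow> multiplicity p d = 1"
    using squarefree_factorial_semiring'[OF d] sq by auto
  ultimately show ?thesis by (metis (no_types, lifting) power_one_right prod.cong)
qed

lemma mu_sum_subsets:
  fixes f :: "nat \<Rightarrow> 'a::comm_ring_1"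
  assumes n: "n > 0"
  shows "(\<Sum>d | d dvd n. of_int (moebius_mu d) * f d) = (\<Sum>S\<in>Pow (prime_factors n). (-1)^card S * f (\<Prod>S))"
proof -
  have "(\<Sum>d | d dvd n. of_int (moebius_mu d) * f d) = (\<Sum>d | d dvd n \<and> squarefree d. of_int (moebius_mu d) * f d)"
    using n by (intro sum.mono_neutral_right) (auto simp: moebius_mu_def)
  also have "\<dots> = (\<Sum>S\<in>Pow (prime_factors n). (-1)^card S * f (\<Prod>S))"
  proof (rule sum.reindex_bij_witness[of _ "\<lambda>S. \<Prod>S" prime_factors])
    fix d assume d: "d \<in> {d. d dvd n \<and> squarefree d}"
    show "\<Prod>(prime_factors d) = d" using d sqf_eq_prod by auto
    show "prime_factors d \<in> Pow (prime_factors n)" using d n by (auto intro: dvd_prime_factors[THEN subsetD])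
    have "d \<noteq> 0" using d by (metis mem_Collect_eq not_squarefree_0)
    then show "(-1)^card (prime_factors d) * f (\<Prod>(prime_factors d)) = of_int (moebius_mu d) * f d"
      using d sqf_eq_prod[of d] by (auto simp: moebius_mu_def)
  next
    fix S assume S: "S \<in> Pow (prime_factors n)"
    hence fin: "finite S" and pr: "\<forall>p\<in>S. prime p" using finite_subset by auto
    show "prime_factors (\<Prod>S) = S" using sqf_prod[OF fin pr] by simp
    have "\<Prod>S dvd \<Prod>(prime_factors n)" using S by (intro prod_dvd_prod_subset) auto
    also have "\<dots> dvd n" using prod_pf_dvd n by simp
    finally show "\<Prod>S \<in> {d. d dvd n \<and> squarefree d}" using sqf_prod[OF fin pr] by simp
  qed
  finally show ?thesis .
qed

lemma alt_sum_Pow: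
  assumes "finite P" "P \<noteq> {}"
  shows "(\<Sum>S\<in>Pow P. (-1::'a::comm_ring_1)^card S) = 0"
proof -
  have "(\<Prod>x\<in>P. (1::'a) - 1) = (\<Sum>X\<in>Pow P. (-1) ^ card X * (\<Prod>x\<in>X. 1) * (\<Prod>x\<in>P-X. 1))"
    by (rule prod_diff_conv_sum[OF assms(1)])
  moreover have "card P > 0" using assms card_gt_0_iff by blast
  hence "(\<Prod>x\<in>P. (1::'a) - 1) = 0" by (simp add: zero_power)
  ultimately show ?thesis by simp
qed

lemma mu_sum_one:
  assumes n: "n > 0"
  shows "(\<Sum>d | d dvd n. of_int (moebius_mu d) :: 'a::comm_ring_1) = (if n = 1 then 1 else 0)"
proof -
  have "(\<Sum>d | d dvd n. of_int (moebius_mu d) :: 'a) = (\<Sum>d | d dvd n. of_int (moebius_mu d) * 1)" by simp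
  also have "\<dots> = (\<Sum>S\<in>Pow (prime_factors n). (-1)^card S * 1)" by (rule mu_sum_subsets[OF n])
  also have "\<dots> = (if n = 1 then 1 else 0)"
  proof (cases "n = 1")
    case True then show ?thesis by simp
  next
    case False
    then have "prime_factors n \<noteq> {}" using n by (auto simp: prime_factorization_empty_iff)
    then show ?thesis using False alt_sum_Pow[of "prime_factors n"] by simp
  qed
  finally show ?thesis .
qed

lemma pow_containing:
  fixes q :: 'b
  assumes fin: "finite P" and q: "q \<in> P"
  shows "(\<Sum>S\<in>{S\<in>Pow P. q \<in> S}. (-1::'a::comm_ring_1)^card S) = (if P = {q} then -1 else 0)"
proof -
  have "(\<Sum>S\<in>{S\<in>Pow P. q \<in> S}. (-1::'a)^card S) = (\<Sum>T\<in>Pow (P - {q}). (-1)^card (insert q T))"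
  proof (rule sum.reindex_bij_witness[of _ "insert q" "\<lambda>S. S - {q}"])
  qed (use q in \<open>auto simp: insert_absorb\<close>)
  also have "\<dots> = (\<Sum>T\<in>Pow (P - {q}). - ((-1)^card T))"
  proof (rule sum.cong)
    fix T assume "T \<in> Pow (P - {q})"
    then have "finite T" "q \<notin> T" using fin finite_subset by auto
    then show "(-1::'a)^card (insert q T) = - ((-1)^card T)" by simp
  qed simp
  also have "\<dots> = - (\<Sum>T\<in>Pow (P - {q}). (-1)^card T)" by (simp add: sum_negf)
  also have "\<dots> = (if P = {q} then -1 else 0)"
  proof (cases "P = {q}")
    case True then show ?thesis by simp
  next
    case False
    then have "P - {q} \<noteq> {}" using q by auto
    then show ?thesis using False alt_sum_Pow[of "P - {q}"] fin by simp
  qed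
  finally show ?thesis .
qed

lemma subset_sum_split:
  fixes g :: "'b \<Rightarrow> 'a::comm_ring_1"
  assumes fin: "finite P"
  shows "(\<Sum>S\<in>Pow P. (-1)^card S * (\<Sum>q\<in>S. g q)) = - (\<Sum>q\<in>P. if P = {q} then g q else 0)"
proof -
  have "(\<Sum>S\<in>Pow P. (-1)^card S * (\<Sum>q\<in>S. g q))
      = (\<Sum>S\<in>Pow P. \<Sum>q\<in>P. (if q \<in> S then (-1)^card S * g q else 0))"
  proof (rule sum.cong)
    fix S assume S: "S \<in> Pow P"
    have "(\<Sum>q\<in>S. g q) = (\<Sum>q\<in>{q\<in>P. q \<in> S}. g q)" using S by (intro sum.cong) auto
    also have "\<dots> = (\<Sum>q\<in>P. if q \<in> S then g q else 0)" using fin by (rule sum.inter_filter)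
    finally show "(-1)^card S * (\<Sum>q\<in>S. g q) = (\<Sum>q\<in>P. (if q \<in> S then (-1)^card S * g q else 0))"
      by (simp add: sum_distrib_left if_distrib cong: if_cong)
  qed simp
  also have "\<dots> = (\<Sum>q\<in>P. \<Sum>S\<in>Pow P. (if q \<in> S then (-1)^card S * g q else 0))"
    by (rule sum.swap)
  also have "\<dots> = (\<Sum>q\<in>P. g q * (\<Sum>S\<in>{S\<in>Pow P. q \<in> S}. (-1)^card S))"
  proof (rule sum.cong)
    fix q assume q: "q \<in> P"
    have "(\<Sum>S\<in>{S\<in>Pow P. q \<in> S}. (-1)^card S * g q) = (\<Sum>S\<in>Pow P. (if q \<in> S then (-1)^card S * g q else 0))"
      using fin by (intro sum.inter_filter) simp
    then show "(\<Sum>S\<in>Pow P. (if q \<in> S then (-1)^card S * g q else 0)) = g q * (\<Sum>S\<in>{S\<in>Pow P. q \<in> S}. (-1)^card S)"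
      by (simp add: sum_distrib_left mult.commute)
  qed simp
  also have "\<dots> = (\<Sum>q\<in>P. - (if P = {q} then g q else 0))"
  proof (rule sum.cong)
    fix q assume q: "q \<in> P"
    show "g q * (\<Sum>S\<in>{S\<in>Pow P. q \<in> S}. (-1)^card S) = - (if P = {q} then g q else 0)"
      using pow_containing[OF fin q, where 'a='a] by simp
  qed simp
  also have "\<dots> = - (\<Sum>q\<in>P. if P = {q} then g q else 0)" by (simp add: sum_negf)
  finally show ?thesis .
qed

definition adiv :: "nat \<Rightarrow> complex" where
  "adiv n = of_int (moebius_mu n) * of_nat (arith_deriv n) / of_nat n"

lemma arith_deriv_sqf:
  assumes "squarefree (d::nat)"
  shows "of_nat (arith_deriv d) / of_nat d = (\<Sum>p\<in>prime_factors d. 1 / of_nat p :: complex)"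
proof -
  have d: "d \<noteq> 0" using assms by (metis not_squarefree_0)
  have m: "\<And>p. p \<in> prime_factors d \<Longrightarrow> multiplicity p d = 1"
    using squarefree_factorial_semiring'[OF d] assms by auto
  have "of_nat (arith_deriv d) = (\<Sum>p\<in>prime_factors d. of_nat (d div p) :: complex)"
    using d m by (simp add: arith_deriv_def)
  also have "\<dots> = (\<Sum>p\<in>prime_factors d. of_nat d / of_nat p)"
  proof (rule sum.cong)
    fix p assume "p \<in> prime_factors d"
    then have "p dvd d" "p > 0" by (auto simp: in_prime_factors_imp_prime prime_gt_0_nat)
    then show "(of_nat (d div p) :: complex) = of_nat d / of_nat p" by (auto elim!: dvdE)
  qed simp
  finally show ?thesis using d by (simp add: sum_divide_distrib)
qed

lemma adiv_conv:
  assumes n: "n > 0"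
  shows "(\<Sum>d | d dvd n. adiv d * 1) = (if \<exists>q. prime_factors n = {q} then - 1 / of_nat (THE q. prime_factors n = {q}) else 0)"
proof -
  have "(\<Sum>d | d dvd n. adiv d * 1) = (\<Sum>d | d dvd n. of_int (moebius_mu d) * (of_nat (arith_deriv d) / of_nat d))"
    by (simp add: adiv_def)
  also have "\<dots> = (\<Sum>S\<in>Pow (prime_factors n). (-1)^card S * (of_nat (arith_deriv (\<Prod>S)) / of_nat (\<Prod>S)))"
    by (rule mu_sum_subsets[OF n])
  also have "\<dots> = (\<Sum>S\<in>Pow (prime_factors n). (-1)^card S * (\<Sum>p\<in>S. 1 / of_nat p))"
  proof (rule sum.cong)
    fix S assume S: "S \<in> Pow (prime_factors n)"
    hence fin: "finite S" and pr: "\<forall>p\<in>S. prime p" using finite_subset by auto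
    show "(-1)^card S * (of_nat (arith_deriv (\<Prod>S)) / of_nat (\<Prod>S)) = (-1)^card S * (\<Sum>p\<in>S. 1 / of_nat p :: complex)"
      using arith_deriv_sqf[of "\<Prod>S"] sqf_prod[OF fin pr] by simp
  qed simp
  also have "\<dots> = - (\<Sum>q\<in>prime_factors n. if prime_factors n = {q} then 1 / of_nat q else 0)"
    by (rule subset_sum_split) simp
  also have "\<dots> = (if \<exists>q. prime_factors n = {q} then - 1 / of_nat (THE q. prime_factors n = {q}) else 0)"
  proof (cases "\<exists>q. prime_factors n = {q}")
    case True
    then obtain q where q: "prime_factors n = {q}" by blast
    then have "(THE q. prime_factors n = {q}) = q" by auto
    then show ?thesis using q by simp
  next
    case False
    then show ?thesis by simp
  qed
  finally show ?thesis .
qed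

lemma nat_powr_mult: "(of_nat x * of_nat y :: complex) powr w = of_nat x powr w * of_nat y powr w"
  by (simp add: powr_times_real)

lemma dirichlet_conv:
  fixes a b :: "nat \<Rightarrow> complex" and w :: complex
  assumes ha: "(\<lambda>n. norm (a n / of_nat n powr w)) summable_on {1..}"
      and hb: "(\<lambda>n. norm (b n / of_nat n powr w)) summable_on {1..}"
  shows "((\<lambda>n. (\<Sum>d | d dvd n. a d * b (n div d)) / of_nat n powr w) has_sum
          ((\<Sum>\<^sub>\<infinity>n\<in>{1..}. a n / of_nat n powr w) * (\<Sum>\<^sub>\<infinity>n\<in>{1..}. b n / of_nat n powr w))) {1..}"
proof -
  define fa where "fa n = a n / of_nat n powr w" for n
  define fb where "fb n = b n / of_nat n powr w" for n
  define A where "A = (\<Sum>\<^sub>\<infinity>n\<in>{1..}. fa n)"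
  define B where "B = (\<Sum>\<^sub>\<infinity>n\<in>{1..}. fb n)"
  define NB where "NB = (\<Sum>\<^sub>\<infinity>n\<in>{1..}. norm (fb n))"
  have ha': "(\<lambda>n. norm (fa n)) summable_on {1::nat..}" using ha by (simp add: fa_def)
  have hb': "(\<lambda>n. norm (fb n)) summable_on {1::nat..}" using hb by (simp add: fb_def)
  have sA: "(fa has_sum A) {1..}" unfolding A_def
    by (rule has_sum_infsum[OF abs_summable_summable[OF ha']])
  have sB: "(fb has_sum B) {1..}" unfolding B_def
    by (rule has_sum_infsum[OF abs_summable_summable[OF hb']])
  define P where "P = (\<lambda>(x,y). fa x * fb y)"
  have absP: "(\<lambda>z. norm (P z)) summable_on ({1..} \<times> {1..})"
  proof (subst Infinite_Sum.abs_summable_on_Sigma_iff, intro conjI ballI)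
    fix x :: nat assume "x \<in> {1..}"
    have "(\<lambda>y. norm (fa x) * norm (fb y)) summable_on {1..}" by (rule summable_on_cmult_right[OF hb'])
    then show "(\<lambda>y. norm (P (x, y))) summable_on {1..}"
      unfolding P_def by (simp only: norm_mult prod.case)
  next
    have "(\<Sum>\<^sub>\<infinity>y\<in>{1..}. norm (P (x, y))) = norm (fa x) * NB" for x
    proof -
      have "(\<Sum>\<^sub>\<infinity>y\<in>{1..}. norm (P (x, y))) = (\<Sum>\<^sub>\<infinity>y\<in>{1..}. norm (fa x) * norm (fb y))"
        unfolding P_def by (simp only: norm_mult prod.case)
      also have "\<dots> = norm (fa x) * NB" unfolding NB_def by (rule infsum_cmult_right')
      finally show ?thesis .
    qed
    moreover have "NB \<ge> 0" unfolding NB_def by (intro infsum_nonneg) auto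
    moreover have "(\<lambda>x. norm (fa x) * NB) summable_on {1..}" by (rule summable_on_cmult_left[OF ha'])
    ultimately show "(\<lambda>x. norm (\<Sum>\<^sub>\<infinity>y\<in>{1..}. norm (P (x, y)))) summable_on {1..}"
      by (simp add: abs_mult)
  qed
  have sP: "(P has_sum (A * B)) ({1..} \<times> {1..})"
  proof (rule has_sum_SigmaI[where g = "\<lambda>x. fa x * B"])
    show "\<And>x. x \<in> {1..} \<Longrightarrow> ((\<lambda>y. P (x, y)) has_sum fa x * B) {1..}"
      unfolding P_def using sB by (simp add: has_sum_cmult_right)
    show "((\<lambda>x. fa x * B) has_sum A * B) {1..}" using sA by (rule has_sum_cmult_left)
    show "P summable_on {1..} \<times> {1..}" using absP by (rule abs_summable_summable)
  qed
  define G where "G = (\<lambda>(n,d). a d * b (n div d) / of_nat n powr w)"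
  define Q where "Q = Sigma {1::nat..} (\<lambda>n. {d. d dvd n})"
  have sG: "(G has_sum (A * B)) Q"
  proof -
    have "(P has_sum (A * B)) ({1..} \<times> {1..}) = (G has_sum (A * B)) Q"
    proof (rule has_sum_reindex_bij_witness[of _ "\<lambda>(n,d). (d, n div d)" "\<lambda>(x,y). (x*y, x)"])
      fix p assume p: "p \<in> ({1::nat..} \<times> {1::nat..})"
      then obtain x y where xy: "p = (x,y)" "x \<ge> 1" "y \<ge> 1" by auto
      show "(case case p of (x, y) \<Rightarrow> (x * y, x) of (n, d) \<Rightarrow> (d, n div d)) = p" using xy by simp
      show "(case p of (x, y) \<Rightarrow> (x * y, x)) \<in> Q" using xy by (simp add: Q_def)
      show "G (case p of (x, y) \<Rightarrow> (x * y, x)) = P p" using xy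
        by (simp add: G_def P_def fa_def fb_def nat_powr_mult)
    next
      fix q assume q: "q \<in> Q"
      then obtain n d where nd: "q = (n,d)" "n \<ge> 1" "d dvd n" by (auto simp: Q_def)
      have d0: "d > 0" by (rule Nat.gr0I) (use nd in auto)
      have "n div d > 0" using nd d0 by (auto simp: div_greater_zero_iff dvd_imp_le)
      note d0 this
      then show "(case case q of (n, d) \<Rightarrow> (d, n div d) of (x, y) \<Rightarrow> (x * y, x)) = q"
        and "(case q of (n, d) \<Rightarrow> (d, n div d)) \<in> {1..} \<times> {1..}" using nd by auto
    qed simp
    then show ?thesis using sP by simp
  qed
  have "((\<lambda>n. \<Sum>d | d dvd n. G (n, d)) has_sum (A * B)) {1..}"
  proof (rule has_sum_Sigma'[OF sG[unfolded Q_def]])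
    fix n :: nat assume "n \<in> {1..}"
    then have "finite {d. d dvd n}" by simp
    then show "((\<lambda>d. G (n, d)) has_sum (\<Sum>d | d dvd n. G (n, d))) {d. d dvd n}" by (rule has_sum_finite)
  qed
  moreover have "(\<Sum>d | d dvd n. G (n, d)) = (\<Sum>d | d dvd n. a d * b (n div d)) / of_nat n powr w" for n
    by (simp add: G_def sum_divide_distrib)
  ultimately show ?thesis by (simp add: A_def B_def fa_def fb_def)
qed

lemma norm_nat_powr: "norm (of_nat n powr w :: complex) = real n powr Re w"
  using norm_powr_real_powr[of "of_nat n" w] by simp

lemma summable_powr_neg:
  assumes "\<sigma> > 1"
  shows "(\<lambda>n::nat. real n powr (-\<sigma>)) summable_on {1..}"
proof -
  have "summable (\<lambda>n::nat. real n powr (-\<sigma>))" using assms by (subst summable_real_powr_iff) auto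
  then have "(\<lambda>n::nat. real n powr (-\<sigma>)) summable_on UNIV"
    by (subst summable_on_UNIV_nonneg_real_iff) auto
  then show ?thesis by (rule summable_on_subset) auto
qed

lemma summable_by_bound:
  fixes f :: "nat \<Rightarrow> complex"
  assumes "\<sigma> > 1" and "\<And>n. n \<ge> 1 \<Longrightarrow> norm (f n) \<le> C * real n powr (-\<sigma>)"
  shows "(\<lambda>n. norm (f n)) summable_on {1..}"
proof (rule Infinite_Sum.abs_summable_on_comparison_test')
  show "(\<lambda>n. C * real n powr (-\<sigma>)) summable_on {1..}"
    using summable_powr_neg[OF assms(1)] by (rule summable_on_cmult_right)
qed (use assms(2) in auto)

lemma norm_div_powr: "n \<ge> 1 \<Longrightarrow> norm (x / of_nat n powr w :: complex) = norm x * real n powr (- Re w)"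
  by (simp add: norm_divide norm_nat_powr powr_minus_divide)

lemma card_pf_pow2: "(n::nat) > 0 \<Longrightarrow> 2 ^ card (prime_factors n) \<le> n"
proof -
  assume n: "n > 0"
  have "(2::nat) ^ card (prime_factors n) = (\<Prod>p\<in>prime_factors n. 2)" by simp
  also have "\<dots> \<le> (\<Prod>p\<in>prime_factors n. p)"
    by (intro prod_mono) (auto intro: prime_ge_2_nat)
  also have "\<dots> \<le> n" using prod_pf_dvd[of n] n by (intro dvd_imp_le) auto
  finally show ?thesis .
qed

lemma card_pf_bound:
  assumes n: "n > 0" and e: "\<epsilon> > 0"
  shows "real (card (prime_factors n)) \<le> real n powr \<epsilon> / (2 powr \<epsilon> - 1)"
proof -
  define k where "k = card (prime_factors n)"
  define t where "t = (2::real) powr \<epsilon>"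
  have t1: "t > 1" unfolding t_def using e powr_less_mono[of 0 e 2] by simp
  have "1 + real k * (t - 1) \<le> (1 + (t - 1)) ^ k" using t1 by (intro Bernoulli_inequality) auto
  also have "\<dots> = t ^ k" by simp
  also have "\<dots> = (2 powr real k) powr \<epsilon>" unfolding t_def
    by (simp add: powr_powr powr_realpow[symmetric] mult.commute)
  also have "\<dots> \<le> real n powr \<epsilon>"
  proof (rule powr_mono2)
    have "(2::real) powr real k = real (2 ^ k)" by (simp add: powr_realpow)
    also have "\<dots> \<le> real n" using card_pf_pow2[OF n] unfolding k_def by linarith
    finally show "2 powr real k \<le> real n" .
  qed (use e in auto)
  finally have "real k * (t - 1) \<le> real n powr \<epsilon>" by simp
  then show ?thesis using t1 unfolding k_def t_def by (simp add: field_simps)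
qed

lemma norm_adiv: "norm (adiv n) \<le> real (card (prime_factors n))"
proof (cases "squarefree n")
  case False then show ?thesis by (simp add: adiv_def moebius_mu_def)
next
  case True
  have "adiv n = of_int (moebius_mu n) * (\<Sum>p\<in>prime_factors n. 1 / of_nat p)"
    unfolding adiv_def using arith_deriv_sqf[OF True] by (metis times_divide_eq_right)
  also have "norm \<dots> \<le> 1 * norm (\<Sum>p\<in>prime_factors n. 1 / of_nat p :: complex)"
    unfolding norm_mult by (intro mult_right_mono) (auto simp: moebius_mu_def)
  also have "\<dots> \<le> (\<Sum>p\<in>prime_factors n. norm (1 / of_nat p :: complex))"
    by (simp add: norm_sum)
  also have "\<dots> \<le> (\<Sum>p\<in>prime_factors n. 1)"
    by (intro sum_mono) (auto simp: norm_divide dest!: in_prime_factors_imp_prime prime_gt_1_nat)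
  finally show ?thesis by simp
qed

lemma adiv_summable:
  assumes "Re w > 1"
  shows "(\<lambda>n. norm (adiv n / of_nat n powr w)) summable_on {1..}"
proof -
  define e where "e = (Re w - 1) / 2"
  have e: "e > 0" using assms by (simp add: e_def)
  show ?thesis
  proof (rule summable_by_bound[where \<sigma> = "Re w - e" and C = "1 / (2 powr e - 1)"])
    show "Re w - e > 1" using assms unfolding e_def by (simp add: field_simps)
    fix n :: nat assume n: "n \<ge> 1"
    have "norm (adiv n / of_nat n powr w) = norm (adiv n) * real n powr (- Re w)" using n by (rule norm_div_powr)
    also have "\<dots> \<le> (real n powr e / (2 powr e - 1)) * real n powr (- Re w)"
      by (intro mult_right_mono order.trans[OF norm_adiv card_pf_bound]) (use n e in auto)
    also have "\<dots> = 1 / (2 powr e - 1) * real n powr (- (Re w - e))"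
      by (simp add: powr_diff powr_minus field_simps)
    finally show "norm (adiv n / of_nat n powr w) \<le> 1 / (2 powr e - 1) * real n powr (- (Re w - e))" .
  qed
qed

lemma one_summable:
  assumes "Re w > 1"
  shows "(\<lambda>n. norm (1 / of_nat n powr w :: complex)) summable_on {1..}"
  by (rule summable_by_bound[where \<sigma> = "Re w" and C = 1]) (use assms in \<open>auto simp: norm_div_powr\<close>)

lemma mu_summable:
  assumes "Re w > 1"
  shows "(\<lambda>n. norm (of_int (moebius_mu n) / of_nat n powr w :: complex)) summable_on {1..}"
proof (rule summable_by_bound[where \<sigma> = "Re w" and C = 1])
  fix n :: nat assume n: "n \<ge> 1"
  have "\<bar>moebius_mu n\<bar> \<le> 1" by (auto simp: moebius_mu_def)
  then have "norm (of_int (moebius_mu n) :: complex) \<le> 1" by simp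
  then show "norm (of_int (moebius_mu n) / of_nat n powr w :: complex) \<le> 1 * real n powr - Re w"
    using n by (simp add: norm_div_powr mult_right_mono)
qed (use assms in auto)

lemma pf_prime_power: "prime (q::nat) \<Longrightarrow> k \<ge> 1 \<Longrightarrow> prime_factors (q ^ k) = {q}"
  by (simp add: prime_factorization_prime_power)

lemma pf_single:
  assumes n: "(n::nat) \<ge> 1" and q: "prime_factors n = {q}"
  shows "prime q" "n = q ^ multiplicity q n" "multiplicity q n \<ge> 1"
proof -
  have "q \<in> prime_factors n" using q by simp
  then show "prime q" "multiplicity q n \<ge> 1" by (auto simp: prime_factors_multiplicity)
  have "(\<Prod>p\<in>prime_factors n. p ^ multiplicity p n) = normalize n" using n by (intro prod_prime_factors) auto
  then show "n = q ^ multiplicity q n" using q by simp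
qed

lemma nat_power_powr: "(of_nat (q ^ k) :: complex) powr w = (of_nat q powr w) ^ k"
proof (induction k)
  case 0 then show ?case by simp
next
  case (Suc k)
  have "(of_nat (q ^ Suc k) :: complex) powr w = (of_nat q * of_nat (q ^ k)) powr w" by simp
  also have "\<dots> = of_nat q powr w * of_nat (q ^ k) powr w" by (rule nat_powr_mult)
  finally show ?case using Suc by simp
qed

definition Hc :: "complex \<Rightarrow> nat \<Rightarrow> complex" where
  "Hc w n = (if \<exists>q. prime_factors n = {q} then - 1 / of_nat (THE q. prime_factors n = {q}) else 0) / of_nat n powr w"

lemma pp_sum:
  assumes w: "Re w > 1" and H: "(Hc w has_sum X) {1..}"
  shows "F_prime w = - X"
proof -
  define S where "S = Sigma {p::nat. prime p} (\<lambda>_. {1::nat..})"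
  define h where "h = (\<lambda>(q::nat,k::nat). q ^ k)"
  have inj: "inj_on h S"
    unfolding inj_on_def S_def h_def by (auto simp: prime_power_inj'')
  have img: "h ` S = {n\<in>{1..}. \<exists>q. prime_factors n = {q}}"
  proof (intro equalityI subsetI)
    fix n assume "n \<in> h ` S"
    then obtain q k where "prime q" "k \<ge> 1" "n = q ^ k" by (auto simp: S_def h_def)
    then show "n \<in> {n\<in>{1..}. \<exists>q. prime_factors n = {q}}"
      using pf_prime_power by (auto simp: Suc_le_eq prime_gt_0_nat)
  next
    fix n :: nat assume "n \<in> {n\<in>{1..}. \<exists>q. prime_factors n = {q}}"
    then obtain q where n: "n \<ge> 1" "prime_factors n = {q}" by auto
    from pf_single[OF n] have "(q, multiplicity q n) \<in> S" "n = h (q, multiplicity q n)"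
      by (auto simp: S_def h_def)
    then show "n \<in> h ` S" by blast
  qed
  have "(Hc w has_sum X) (h ` S)"
    unfolding img using H by (subst has_sum_cong_neutral[where g = "Hc w" and T = "{1..}"]) (auto simp: Hc_def)
  then have sS: "((Hc w \<circ> h) has_sum X) S" using has_sum_reindex[OF inj] by blast
  define z where "z q = 1 / (of_nat q powr w :: complex)" for q
  have Hh: "(Hc w \<circ> h) (q, k) = - 1 / of_nat q * z q ^ k" if "prime q" "k \<ge> 1" for q k
  proof -
    have pf: "prime_factors (q ^ k) = {q}" using pf_prime_power that by auto
    then have "(THE q'. prime_factors (q ^ k) = {q'}) = q" by auto
    then show ?thesis using pf by (simp add: Hc_def h_def z_def nat_power_powr[unfolded of_nat_power] power_one_over)
  qed
  have zn: "norm (z q) < 1" if "prime q" for q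
  proof -
    have q1: "real q > 1" using that prime_gt_1_nat by auto
    have "1 < real q powr Re w" using q1 w powr_less_mono[of 0 "Re w" "real q"] by simp
    then show ?thesis by (simp add: z_def norm_divide norm_nat_powr divide_less_eq)
  qed
  have "((\<lambda>q. - 1 / of_nat q * (z q / (1 - z q))) has_sum X) {p. prime p}"
  proof (rule has_sum_Sigma'[OF sS[unfolded S_def]])
    fix q :: nat assume q: "q \<in> {p. prime p}"
    have "((\<lambda>k. z q ^ k) has_sum (z q / (1 - z q))) {1..}" using zn q by (intro has_sum_geometric_from_1) auto
    then have "((\<lambda>k. - 1 / of_nat q * z q ^ k) has_sum (- 1 / of_nat q * (z q / (1 - z q)))) {1..}"
      by (rule has_sum_cmult_right)
    then show "((\<lambda>k. (Hc w \<circ> h) (q, k)) has_sum (- 1 / of_nat q * (z q / (1 - z q)))) {1..}"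
      using Hh q by (subst has_sum_cong[where g = "\<lambda>k. - 1 / of_nat q * z q ^ k"]) auto
  qed
  moreover have "- 1 / of_nat q * (z q / (1 - z q)) = - (1 / (of_nat q powr (w + 1) - of_nat q))" if "prime q" for q
  proof -
    define Q where "Q = (of_nat q powr w :: complex)"
    have q0: "(of_nat q :: complex) \<noteq> 0" using that prime_gt_0_nat by auto
    have Q0: "Q \<noteq> 0" using q0 by (simp add: Q_def)
    have Q1: "Q \<noteq> 1" using zn[OF that] by (auto simp: z_def Q_def[symmetric])
    have "of_nat q powr (w + 1) = Q * of_nat q" by (simp add: Q_def powr_add)
    then show ?thesis using Q0 Q1 q0 unfolding z_def Q_def[symmetric]
      by (simp add: field_simps)
  qed
  ultimately have "((\<lambda>q. - (1 / (of_nat q powr (w + 1) - of_nat q))) has_sum X) {p. prime p}"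
    by (subst (asm) has_sum_cong) auto
  then have "((\<lambda>q. 1 / (of_nat q powr (w + 1) - of_nat q)) has_sum - X) {p. prime p}"
    using has_sum_uminus by fastforce
  then show ?thesis unfolding F_prime_def by (rule infsumI)
qed

theorem mainTheorem19:
  fixes s :: complex
  assumes "Re s > 2"
  shows "((\<lambda>n::nat. of_int (moebius_mu n) * of_nat (arith_deriv n) / of_nat n powr s)
           has_sum (- F_prime (s - 1) / zeta_dirichlet (s - 1))) {1..}"
proof -
  define w where "w = s - 1"
  have w: "Re w > 1" using assms by (simp add: w_def)
  define A where "A = (\<Sum>\<^sub>\<infinity>n\<in>{1..}. adiv n / of_nat n powr w)"
  define Z where "Z = (\<Sum>\<^sub>\<infinity>n\<in>{1..}. 1 / of_nat n powr w :: complex)"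
  define M where "M = (\<Sum>\<^sub>\<infinity>n\<in>{1..}. of_int (moebius_mu n) / of_nat n powr w :: complex)"
  have Zdef: "zeta_dirichlet w = Z" by (simp add: zeta_dirichlet_def Z_def)
  have c1: "((\<lambda>n. (\<Sum>d | d dvd n. adiv d * 1) / of_nat n powr w) has_sum (A * Z)) {1..}"
    using dirichlet_conv[OF adiv_summable[OF w] one_summable[OF w]] by (simp add: A_def Z_def)
  have "(\<Sum>d | d dvd n. adiv d * 1) / of_nat n powr w = Hc w n" if "n \<in> {1..}" for n
    unfolding Hc_def using that by (subst adiv_conv) auto
  then have "(Hc w has_sum (A * Z)) {1..}"
    using c1 by (subst (asm) has_sum_cong[where g = "Hc w"]) auto
  then have F: "F_prime w = - (A * Z)" by (rule pp_sum[OF w])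
  have c2: "((\<lambda>n. (\<Sum>d | d dvd n. of_int (moebius_mu d) * 1) / of_nat n powr w) has_sum (M * Z)) {1..}"
    using dirichlet_conv[OF mu_summable[OF w] one_summable[OF w]] by (simp add: M_def Z_def)
  have "((\<lambda>n. (\<Sum>d | d dvd n. of_int (moebius_mu d) * 1) / of_nat n powr w :: complex) has_sum 1) {1..}"
  proof -
    have "((\<lambda>n. (\<Sum>d | d dvd n. of_int (moebius_mu d) * 1) / of_nat n powr w :: complex) has_sum 1) {1..}
        \<longleftrightarrow> ((\<lambda>n. 1::complex) has_sum 1) {1::nat}"
    proof (rule has_sum_cong_neutral)
      fix n :: nat assume n: "n \<in> {1..} - {1}"
      then have "(\<Sum>d | d dvd n. of_int (moebius_mu d) :: complex) = 0" using mu_sum_one[of n] by auto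
      then show "(\<Sum>d | d dvd n. of_int (moebius_mu d) * 1) / of_nat n powr w = (0::complex)" by simp
    next
      fix n :: nat assume n: "n \<in> {1..} \<inter> {1}"
      then show "(\<Sum>d | d dvd n. of_int (moebius_mu d) * 1) / of_nat n powr w = (1::complex)"
        by (simp add: moebius_mu_def)
    qed auto
    moreover have "((\<lambda>n. 1::complex) has_sum 1) {1::nat}" by (rule has_sum_finiteI) auto
    ultimately show ?thesis by blast
  qed
  then have MZ: "M * Z = 1" using c2 has_sum_unique by blast
  then have Z0: "Z \<noteq> 0" by auto
  have sA: "((\<lambda>n. adiv n / of_nat n powr w) has_sum A) {1..}"
    unfolding A_def by (rule has_sum_infsum[OF abs_summable_summable[OF adiv_summable[OF w]]])
  have eq: "of_int (moebius_mu n) * of_nat (arith_deriv n) / of_nat n powr s = adiv n / of_nat n powr w"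
    if "n \<in> {1..}" for n :: nat
  proof -
    have n0: "(of_nat n :: complex) \<noteq> 0" using that by auto
    have "of_nat n powr w * (of_nat n :: complex) = of_nat n powr w * of_nat n powr 1" by simp
    also have "\<dots> = of_nat n powr (w + 1)" by (rule powr_add[symmetric])
    finally have "of_nat n powr s = of_nat n powr w * (of_nat n :: complex)" by (simp add: w_def)
    then show ?thesis using n0 by (simp add: adiv_def field_simps)
  qed
  have "A = - F_prime (s - 1) / zeta_dirichlet (s - 1)"
    using F Z0 by (simp add: Zdef[unfolded w_def] w_def)
  then show ?thesis using sA eq by (subst has_sum_cong[where g = "\<lambda>n. adiv n / of_nat n powr w"]) auto
qed

end
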